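(* Let $(Y,X,A)$ be a random triple with $Y\in\mathbb{R}$, $X\in\mathcal{X}\subset\mathbb{R}^d$ having density $p(x)$, and $A\in\{0,1\}$, with $\mathbb{E}[Y^2]<\infty$. Define the response functions $\mu_a(x)=\mathbb{E}[Y\mid X=x,A=a]$ for $a\in\{0,1\}$, the propensity score $e(x)=\mathbb{P}(A=1\mid X=x)$, the conditional mean outcome $m(x)=\mathbb{E}[Y\mid X=x]$, and $\tau(x)=\mu_1(x)-\mu_0(x)$. For $a\in\{0,1\}$ let $\sigma_y^2(x;a)=\int (y-\mu_a(x))^2\, p(y\mid X=x, A=a)\,dy$ and $\tilde\sigma_B^2(a)=\int_{\mathcal{X}}\sigma_y^2(x;a)\,p(x;a)\,dx$, where $p(x;a)$ denotes the joint density of $(X=x,A=a)$. Let $f:\mathcal{X}\times\{0,1\}\to\mathbb{R}$ be an outcome model (with $\mathbb{E}[f(X,a)^2]<\infty$) and $\tau_f(x)=f(x,1)-f(x,0)$. Define $$R\text{-risk}^*(f)=\mathbb{E}\Big[\big((Y-m(X))-(A-e(X))\,\tau_f(X)\big)^2\Big].$$ Then $$R\text{-risk}^*(f)=\int_{\mathcal{X}} e(x)\big(1-e(x)\big)\big(\tau(x)-\tau_f(x)\big)^2\,p(x)\,dx+\tilde\sigma_B^2(1)+\tilde\sigma_B^2(0).$$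
   Context: Setting of binary-treatment causal inference in the potential outcomes framework; under the standard strong ignorability assumptions $\tau(x)=\mu_1(x)-\mu_0(x)$ is the conditional average treatment effect, and $\int (\tau(x)-\tau_f(x))^2p(x)dx$ is the oracle "$\tau$-risk" of $f$. The risk $R\text{-risk}^*$ is the semi-oracle R-risk, using the true nuisances $m$ and $e$. *)

theory Defs
  imports "HOL-Probability.Probability"
begin

text \<open>Model: covariate X with density p on the domain, treatment A in {0,1} with
  P(A=1 | X=x) = e x, outcome Y with conditional density q x a y = p(y | X=x, A=a).
  The joint density of (X,A,Y) w.r.t. lborel x counting measure on {0,1} x lborel
  is then p x * P(A=a | X=x) * q x a y.\<close>

definition treat_prob :: "('x \<Rightarrow> real) \<Rightarrow> 'x \<Rightarrow> real \<Rightarrow> real" where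
  "treat_prob e x a = (if a = 1 then e x else 1 - e x)"

definition joint_xa :: "('x \<Rightarrow> real) \<Rightarrow> ('x \<Rightarrow> real) \<Rightarrow> 'x \<Rightarrow> real \<Rightarrow> real" where
  "joint_xa p e x a = p x * treat_prob e x a"

definition resp :: "('x \<Rightarrow> real \<Rightarrow> real \<Rightarrow> real) \<Rightarrow> real \<Rightarrow> 'x \<Rightarrow> real" where
  "resp q a x = (\<integral>y. y * q x a y \<partial>lborel)"

text \<open>conditional mean outcome m(x) = E[Y | X=x], using p(y | X=x) = sum_a P(A=a|X=x) p(y|x,a)\<close>
definition cond_mean :: "('x \<Rightarrow> real) \<Rightarrow> ('x \<Rightarrow> real \<Rightarrow> real \<Rightarrow> real) \<Rightarrow> 'x \<Rightarrow> real" where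
  "cond_mean e q x = (\<integral>y. y * (e x * q x 1 y + (1 - e x) * q x 0 y) \<partial>lborel)"

definition cate :: "('x \<Rightarrow> real \<Rightarrow> real \<Rightarrow> real) \<Rightarrow> 'x \<Rightarrow> real" where
  "cate q x = resp q 1 x - resp q 0 x"

definition tau_f :: "('x \<Rightarrow> real \<Rightarrow> real) \<Rightarrow> 'x \<Rightarrow> real" where
  "tau_f f x = f x 1 - f x 0"

definition sigma_y2 :: "('x \<Rightarrow> real \<Rightarrow> real \<Rightarrow> real) \<Rightarrow> 'x \<Rightarrow> real \<Rightarrow> real" where
  "sigma_y2 q x a = (\<integral>y. (y - resp q a x)\<^sup>2 * q x a y \<partial>lborel)"

definition sigma_B2 :: "'x::euclidean_space set \<Rightarrow> ('x \<Rightarrow> real) \<Rightarrow> ('x \<Rightarrow> real) \<Rightarrow>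
    ('x \<Rightarrow> real \<Rightarrow> real \<Rightarrow> real) \<Rightarrow> real \<Rightarrow> real" where
  "sigma_B2 XX p e q a = (\<integral>x\<in>XX. sigma_y2 q x a * joint_xa p e x a \<partial>lborel)"

definition R_risk_star :: "'w measure \<Rightarrow> ('w \<Rightarrow> 'x) \<Rightarrow> ('w \<Rightarrow> real) \<Rightarrow> ('w \<Rightarrow> real) \<Rightarrow>
    ('x \<Rightarrow> real) \<Rightarrow> ('x \<Rightarrow> real) \<Rightarrow> ('x \<Rightarrow> real \<Rightarrow> real) \<Rightarrow> real" where
  "R_risk_star M X A Y m e f =
     (\<integral>\<omega>. ((Y \<omega> - m (X \<omega>)) - (A \<omega> - e (X \<omega>)) * tau_f f (X \<omega>))\<^sup>2 \<partial>M)"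

end

theory Submission
  imports Defs
begin


lemma transfer:
  fixes Z :: "'w \<Rightarrow> ('x::euclidean_space) \<times> real \<times> real"
    and G :: "'x \<Rightarrow> real \<Rightarrow> real \<Rightarrow> real"
    and h :: "'x \<times> real \<times> real \<Rightarrow> ennreal"
  assumes D: "distributed M (lborel \<Otimes>\<^sub>M count_space {0, 1} \<Otimes>\<^sub>M lborel) Z (\<lambda>(x,a,y). ennreal (G x a y))"
    and Gm: "(\<lambda>(x,a,y). G x a y) \<in> borel_measurable (lborel \<Otimes>\<^sub>M count_space {0, 1} \<Otimes>\<^sub>M lborel)"
    and hm: "h \<in> borel_measurable (lborel \<Otimes>\<^sub>M count_space {0, 1} \<Otimes>\<^sub>M lborel)"
  shows "(\<integral>\<^sup>+\<omega>. h (Z \<omega>) \<partial>M) = (\<integral>\<^sup>+x. (\<integral>\<^sup>+y. ennreal (G x 0 y) * h (x,0,y) \<partial>lborel)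
            + (\<integral>\<^sup>+y. ennreal (G x 1 y) * h (x,1,y) \<partial>lborel) \<partial>lborel)"
proof -
  let ?N = "lborel \<Otimes>\<^sub>M count_space {0, 1} \<Otimes>\<^sub>M (lborel::real measure)"
  let ?g = "\<lambda>(x,a,y). ennreal (G x a y)"
  have Zm: "Z \<in> measurable M ?N" using distributed_measurable[OF D] .
  have gm: "?g \<in> borel_measurable ?N"
  proof -
    have "(\<lambda>w. ennreal ((\<lambda>(x,a,y). G x a y) w)) \<in> borel_measurable ?N"
      using Gm by measurable
    moreover have "(\<lambda>w. ennreal ((\<lambda>(x,a,y). G x a y) w)) = ?g" by (auto simp: fun_eq_iff)
    ultimately show ?thesis by simp
  qed
  have "(\<integral>\<^sup>+\<omega>. h (Z \<omega>) \<partial>M) = integral\<^sup>N (distr M ?N Z) h"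
    using nn_integral_distr[OF Zm] hm by simp
  also have "\<dots> = integral\<^sup>N (density ?N ?g) h"
    using distributed_distr_eq_density[OF D] by simp
  also have "\<dots> = (\<integral>\<^sup>+ w. ?g w * h w \<partial>?N)"
    by (rule nn_integral_density[OF gm hm])
  also have "\<dots> = (\<integral>\<^sup>+x. \<integral>\<^sup>+ ay. ?g (x, ay) * h (x, ay) \<partial>(count_space {0, 1} \<Otimes>\<^sub>M lborel) \<partial>lborel)"
  proof -
    interpret s: sigma_finite_measure "count_space {0, 1::real} \<Otimes>\<^sub>M (lborel::real measure)"
      by (intro sigma_finite_pair_measure
          sigma_finite_measure_count_space_finite) (auto intro: lborel.sigma_finite_measure_axioms)
    show ?thesis by (rule s.nn_integral_fst[symmetric]) (use gm hm in measurable)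
  qed
  also have "\<dots> = (\<integral>\<^sup>+x. (\<integral>\<^sup>+y. ennreal (G x 0 y) * h (x,0,y) \<partial>lborel)
            + (\<integral>\<^sup>+y. ennreal (G x 1 y) * h (x,1,y) \<partial>lborel) \<partial>lborel)"
  proof (rule nn_integral_cong)
    fix x :: 'x
    have "(\<integral>\<^sup>+ ay. ?g (x, ay) * h (x, ay) \<partial>(count_space {0, 1} \<Otimes>\<^sub>M lborel))
       = (\<integral>\<^sup>+ a. \<integral>\<^sup>+ y. ?g (x, a, y) * h (x, a, y) \<partial>lborel \<partial>count_space {0,1})"
      by (rule lborel.nn_integral_fst[symmetric]) (use gm hm in measurable)
    also have "\<dots> = (\<Sum>a\<in>{0,1::real}. \<integral>\<^sup>+ y. ?g (x, a, y) * h (x, a, y) \<partial>lborel)"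
      by (rule nn_integral_count_space_finite) simp
    also have "\<dots> = (\<integral>\<^sup>+y. ennreal (G x 0 y) * h (x,0,y) \<partial>lborel)
            + (\<integral>\<^sup>+y. ennreal (G x 1 y) * h (x,1,y) \<partial>lborel)" by simp
    finally show "(\<integral>\<^sup>+ ay. ?g (x, ay) * h (x, ay) \<partial>(count_space {0, 1} \<Otimes>\<^sub>M lborel)) = \<dots>" .
  qed
  finally show ?thesis .
qed



lemma var_lemma:
  fixes q :: "real \<Rightarrow> real" and c :: real
  assumes qi: "integrable lborel q" and q1: "(\<integral>y. q y \<partial>lborel) = 1"
    and qn: "\<And>y. q y \<ge> 0" and q2: "integrable lborel (\<lambda>y. y\<^sup>2 * q y)"
  shows "integrable lborel (\<lambda>y. y * q y)"
    and "integrable lborel (\<lambda>y. (y - c)\<^sup>2 * q y)"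
    and "(\<integral>y. (y - c)\<^sup>2 * q y \<partial>lborel) = (\<integral>y. (y - (\<integral>y. y * q y \<partial>lborel))\<^sup>2 * q y \<partial>lborel) + ((\<integral>y. y * q y \<partial>lborel) - c)\<^sup>2"
proof -
  have qm: "q \<in> borel_measurable lborel" using qi by (rule borel_measurable_integrable)
  show i1: "integrable lborel (\<lambda>y. y * q y)"
  proof (rule Bochner_Integration.integrable_bound[OF Bochner_Integration.integrable_add[OF qi q2]])
    show "(\<lambda>y. y * q y) \<in> borel_measurable lborel" using qm by measurable
    show "AE x in lborel. norm (x * q x) \<le> norm (q x + x\<^sup>2 * q x)"
    proof (rule AE_I2)
      fix x :: real
      have a0: "0 \<le> (\<bar>x\<bar> - 1)\<^sup>2" by simp
      have a: "\<bar>x\<bar> \<le> 1 + x\<^sup>2" using a0 unfolding power2_eq_square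
        by (simp add: algebra_simps abs_mult_self_eq)
      have "norm (x * q x) = \<bar>x\<bar> * q x" using qn[of x] by (simp add: abs_mult)
      also have "\<dots> \<le> (1 + x\<^sup>2) * q x" using a qn[of x] by (rule mult_right_mono)
      also have "\<dots> = norm (q x + x\<^sup>2 * q x)" using qn[of x] by (simp add: algebra_simps)
      finally show "norm (x * q x) \<le> norm (q x + x\<^sup>2 * q x)" .
    qed
  qed
  have eq: "\<And>c y. (y - c)\<^sup>2 * q y = y\<^sup>2 * q y - 2 * c * (y * q y) + c\<^sup>2 * q y"
    by (simp add: power2_eq_square algebra_simps)
  have int: "\<And>c. integrable lborel (\<lambda>y. (y - c)\<^sup>2 * q y)"
    unfolding eq by (intro Bochner_Integration.integrable_add Bochner_Integration.integrable_diff Bochner_Integration.integrable_mult_right q2 i1 qi)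
  then show "integrable lborel (\<lambda>y. (y - c)\<^sup>2 * q y)" .
  have val: "\<And>c. (\<integral>y. (y - c)\<^sup>2 * q y \<partial>lborel) = (\<integral>y. y\<^sup>2 * q y \<partial>lborel) - 2 * c * (\<integral>y. y * q y \<partial>lborel) + c\<^sup>2"
    unfolding eq
    by (subst Bochner_Integration.integral_add Bochner_Integration.integral_diff Bochner_Integration.integral_mult_right, (intro Bochner_Integration.integrable_add Bochner_Integration.integrable_diff Bochner_Integration.integrable_mult_right q2 i1 qi)+)+
       (simp add: q1)
  show "(\<integral>y. (y - c)\<^sup>2 * q y \<partial>lborel) = (\<integral>y. (y - (\<integral>y. y * q y \<partial>lborel))\<^sup>2 * q y \<partial>lborel) + ((\<integral>y. y * q y \<partial>lborel) - c)\<^sup>2"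
    unfolding val by (simp add: power2_eq_square algebra_simps)
qed


lemma fiber_K:
  fixes q :: "real \<Rightarrow> real" and w K :: real
  assumes qi: "integrable lborel q" and q1: "(\<integral>y. q y \<partial>lborel) = 1" and qn: "\<And>y. q y \<ge> 0"
    and w: "w \<ge> 0" and K: "K \<ge> 0"
  shows "(\<integral>\<^sup>+y. ennreal (w * q y) * ennreal K \<partial>lborel) = ennreal (w * K)"
proof -
  have "(\<integral>\<^sup>+y. ennreal (w * q y) * ennreal K \<partial>lborel) = (\<integral>\<^sup>+y. ennreal (w * K) * ennreal (q y) \<partial>lborel)"
    using w K qn by (intro nn_integral_cong) (simp add: ennreal_mult'[symmetric] mult_ac)
  also have "\<dots> = ennreal (w * K) * (\<integral>\<^sup>+y. ennreal (q y) \<partial>lborel)"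
    using qi by (intro nn_integral_cmult) (simp add: borel_measurable_integrable)
  also have "(\<integral>\<^sup>+y. ennreal (q y) \<partial>lborel) = 1"
    using nn_integral_eq_integral[OF qi] qn q1 by simp
  finally show ?thesis by simp
qed

lemma fiber:
  fixes q :: "real \<Rightarrow> real" and w c :: real
  assumes qi: "integrable lborel q" and q1: "(\<integral>y. q y \<partial>lborel) = 1" and qn: "\<And>y. q y \<ge> 0"
    and w: "w \<ge> 0"
    and fin: "(\<integral>\<^sup>+y. ennreal (w * q y) * ennreal (y\<^sup>2) \<partial>lborel) \<noteq> \<infinity>"
  shows "(\<integral>\<^sup>+y. ennreal (w * q y) * ennreal ((y - c)\<^sup>2) \<partial>lborel)
      = ennreal (w * ((\<integral>y. (y - (\<integral>y. y * q y \<partial>lborel))\<^sup>2 * q y \<partial>lborel) + ((\<integral>y. y * q y \<partial>lborel) - c)\<^sup>2))"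
    and "0 < w \<Longrightarrow> integrable lborel (\<lambda>y. y * q y)"
proof -
  have qm[measurable]: "q \<in> borel_measurable lborel" using qi by (rule borel_measurable_integrable)
  have split: "\<And>g. (\<forall>y. g y \<ge> 0) \<Longrightarrow> g \<in> borel_measurable lborel \<Longrightarrow>
     (\<integral>\<^sup>+y. ennreal (w * q y) * ennreal (g y) \<partial>lborel) = ennreal w * (\<integral>\<^sup>+y. ennreal (g y * q y) \<partial>lborel)"
  proof -
    fix g :: "real \<Rightarrow> real" assume g: "\<forall>y. g y \<ge> 0" and gm: "g \<in> borel_measurable lborel"
    have "(\<integral>\<^sup>+y. ennreal (w * q y) * ennreal (g y) \<partial>lborel) = (\<integral>\<^sup>+y. ennreal w * ennreal (g y * q y) \<partial>lborel)"
      using w g qn by (intro nn_integral_cong) (simp add: ennreal_mult'[symmetric] mult_ac)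
    also have "\<dots> = ennreal w * (\<integral>\<^sup>+y. ennreal (g y * q y) \<partial>lborel)"
      by (intro nn_integral_cmult) (use gm qm in measurable)
    finally show "(\<integral>\<^sup>+y. ennreal (w * q y) * ennreal (g y) \<partial>lborel) = ennreal w * (\<integral>\<^sup>+y. ennreal (g y * q y) \<partial>lborel)" .
  qed
  show "(\<integral>\<^sup>+y. ennreal (w * q y) * ennreal ((y - c)\<^sup>2) \<partial>lborel)
      = ennreal (w * ((\<integral>y. (y - (\<integral>y. y * q y \<partial>lborel))\<^sup>2 * q y \<partial>lborel) + ((\<integral>y. y * q y \<partial>lborel) - c)\<^sup>2))"
  proof (cases "w = 0")
    case True then show ?thesis by simp
  next
    case False
    then have wp: "w > 0" using w by simp
    have "ennreal w * (\<integral>\<^sup>+y. ennreal (y\<^sup>2 * q y) \<partial>lborel) \<noteq> \<infinity>"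
      using fin split[of "\<lambda>y. y\<^sup>2"] by simp
    then have f2: "(\<integral>\<^sup>+y. ennreal (y\<^sup>2 * q y) \<partial>lborel) < \<infinity>"
      using wp by (simp add: ennreal_mult_eq_top_iff top.not_eq_extremum)
    have q2: "integrable lborel (\<lambda>y. y\<^sup>2 * q y)"
      by (rule integrableI_nonneg) (use f2 qn in auto)
    note V = var_lemma[OF qi q1 qn q2]
    have "(\<integral>\<^sup>+y. ennreal (w * q y) * ennreal ((y - c)\<^sup>2) \<partial>lborel)
       = ennreal w * (\<integral>\<^sup>+y. ennreal ((y - c)\<^sup>2 * q y) \<partial>lborel)"
      by (rule split) auto
    also have "(\<integral>\<^sup>+y. ennreal ((y - c)\<^sup>2 * q y) \<partial>lborel) = ennreal (\<integral>y. (y - c)\<^sup>2 * q y \<partial>lborel)"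
      by (rule nn_integral_eq_integral[OF V(2)]) (use qn in auto)
    also have "ennreal w * \<dots> = ennreal (w * (\<integral>y. (y - c)\<^sup>2 * q y \<partial>lborel))"
      using w by (simp add: ennreal_mult')
    finally show ?thesis using V(3)[of c] by simp
  qed
  assume wp: "0 < w"
  have "ennreal w * (\<integral>\<^sup>+y. ennreal (y\<^sup>2 * q y) \<partial>lborel) \<noteq> \<infinity>"
    using fin split[of "\<lambda>y. y\<^sup>2"] by simp
  then have f2: "(\<integral>\<^sup>+y. ennreal (y\<^sup>2 * q y) \<partial>lborel) < \<infinity>"
    using wp by (simp add: ennreal_mult_eq_top_iff top.not_eq_extremum)
  have q2: "integrable lborel (\<lambda>y. y\<^sup>2 * q y)"
    by (rule integrableI_nonneg) (use f2 qn in auto)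
  show "integrable lborel (\<lambda>y. y * q y)" using var_lemma(1)[OF qi q1 qn q2] .
qed

lemma qcomp:
  fixes q :: "'x::euclidean_space \<Rightarrow> real \<Rightarrow> real \<Rightarrow> real"
  assumes "(\<lambda>(x, a, y). q x a y) \<in> borel_measurable (lborel \<Otimes>\<^sub>M count_space {0, 1} \<Otimes>\<^sub>M lborel)"
    and "F \<in> measurable K lborel" and "Ga \<in> measurable K (count_space {0, 1})" and "Hy \<in> measurable K lborel"
  shows "(\<lambda>w. q (F w) (Ga w) (Hy w)) \<in> borel_measurable K"
  using measurable_compose[OF measurable_Pair[OF assms(2) measurable_Pair[OF assms(3) assms(4)]] assms(1)]
  by simp



lemma alg_id:
  fixes P E T sa sb u0 u1 M :: real
  assumes "M = E*u1 + (1-E)*u0"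
  shows "P*(1-E)*(sa + (u0 - (M + (0 - E)*T))\<^sup>2) + P*E*(sb + (u1 - (M + (1 - E)*T))\<^sup>2)
       = E*(1-E)*((u1 - u0) - T)\<^sup>2*P + sb*(P*E) + sa*(P*(1-E))"
  unfolding assms power2_eq_square by algebra

lemma alg_bound:
  fixes P E T sa sb u0 u1 :: real
  assumes "0 \<le> E" "E \<le> 1" "0 \<le> P" "0 \<le> sa" "0 \<le> sb"
  shows "E*(1-E)*((u1 - u0) - T)\<^sup>2*P + sb*(P*E) + sa*(P*(1-E))
       \<le> 2*(P*(1-E)*(sa + u0\<^sup>2) + P*E*(sb + u1\<^sup>2)) + 2*(P*T\<^sup>2)"
proof -
  let ?d = "u1 - u0"
  have e0: "0 \<le> E*(1-E)" using assms by simp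
  have e1: "E*(1-E) \<le> 1" using assms by (intro mult_le_one) auto
  have h1: "(?d - T)\<^sup>2 \<le> 2*?d\<^sup>2 + 2*T\<^sup>2"
  proof -
    have "0 \<le> (?d + T)\<^sup>2" by simp
    then show ?thesis by (simp add: power2_eq_square algebra_simps)
  qed
  have h2: "E*(1-E)*?d\<^sup>2 \<le> E*u1\<^sup>2 + (1-E)*u0\<^sup>2"
  proof -
    have "E*u1\<^sup>2 + (1-E)*u0\<^sup>2 - E*(1-E)*?d\<^sup>2 = (E*u1 + (1-E)*u0)\<^sup>2"
      by (simp add: power2_eq_square algebra_simps)
    moreover have "0 \<le> (E*u1 + (1-E)*u0)\<^sup>2" by simp
    ultimately show ?thesis by linarith
  qed
  have h3: "E*(1-E)*(?d - T)\<^sup>2 \<le> 2*(E*u1\<^sup>2 + (1-E)*u0\<^sup>2) + 2*T\<^sup>2"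
  proof -
    have a: "E*(1-E)*(?d - T)\<^sup>2 \<le> E*(1-E)*(2*?d\<^sup>2 + 2*T\<^sup>2)"
      using h1 e0 by (rule mult_left_mono)
    have b: "E*(1-E)*(2*?d\<^sup>2 + 2*T\<^sup>2) = 2*(E*(1-E)*?d\<^sup>2) + 2*(E*(1-E)*T\<^sup>2)" by (simp add: algebra_simps)
    have c: "E*(1-E)*T\<^sup>2 \<le> T\<^sup>2" by (rule mult_left_le_one_le) (use e0 e1 in auto)
    show ?thesis using a b c h2 by argo
  qed
  have h4: "E*(1-E)*(?d - T)\<^sup>2*P \<le> (2*(E*u1\<^sup>2 + (1-E)*u0\<^sup>2) + 2*T\<^sup>2)*P"
    using h3 assms(3) by (rule mult_right_mono)
  have h5: "sb*(P*E) \<le> 2*(P*E* sb)" "sa*(P*(1-E)) \<le> 2*(P*(1-E)* sa)"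
    using assms by (simp_all add: mult_nonneg_nonneg)
  have h6: "(2*(E*u1\<^sup>2 + (1-E)*u0\<^sup>2) + 2*T\<^sup>2)*P = 2*(P*(1-E)*u0\<^sup>2) + 2*(P*E*u1\<^sup>2) + 2*(P*T\<^sup>2)"
    by (simp add: algebra_simps)
  have h7: "2*(P*(1-E)*(sa + u0\<^sup>2) + P*E*(sb + u1\<^sup>2)) = 2*(P*(1-E)* sa) + 2*(P*(1-E)*u0\<^sup>2) + 2*(P*E* sb) + 2*(P*E*u1\<^sup>2)"
    by (simp add: algebra_simps)
  show ?thesis using h4 h5 h6 h7 by linarith
qed


theorem proposition2:
  fixes M :: "'w measure"
    and X :: "'w \<Rightarrow> real ^ 'd" and A :: "'w \<Rightarrow> real" and Y :: "'w \<Rightarrow> real"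
    and XX :: "(real ^ 'd) set"
    and p :: "real ^ 'd \<Rightarrow> real" and e :: "real ^ 'd \<Rightarrow> real"
    and q :: "real ^ 'd \<Rightarrow> real \<Rightarrow> real \<Rightarrow> real"
    and f :: "real ^ 'd \<Rightarrow> real \<Rightarrow> real"
  assumes "prob_space M"
    and "XX \<in> sets lborel"
    and "AE \<omega> in M. X \<omega> \<in> XX"
    and "p \<in> borel_measurable lborel" and "\<And>x. p x \<ge> 0"
    and "e \<in> borel_measurable lborel" and "\<And>x. 0 \<le> e x \<and> e x \<le> 1"
    and "(\<lambda>(x, a, y). q x a y) \<in> borel_measurable (lborel \<Otimes>\<^sub>M count_space {0, 1} \<Otimes>\<^sub>M lborel)"
    and "\<And>x a y. q x a y \<ge> 0"
    and "\<And>x a. x \<in> XX \<Longrightarrow> a \<in> {0, 1} \<Longrightarrow>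
           integrable lborel (q x a) \<and> (\<integral>y. q x a y \<partial>lborel) = 1"
    and "distributed M (lborel \<Otimes>\<^sub>M count_space {0, 1} \<Otimes>\<^sub>M lborel)
           (\<lambda>\<omega>. (X \<omega>, A \<omega>, Y \<omega>))
           (\<lambda>(x, a, y). ennreal (p x * treat_prob e x a * q x a y))"
    and "integrable M (\<lambda>\<omega>. (Y \<omega>)\<^sup>2)"
    and "\<And>a. a \<in> {0, 1} \<Longrightarrow> (\<lambda>x. f x a) \<in> borel_measurable lborel"
    and "\<And>a. a \<in> {0, 1} \<Longrightarrow> integrable M (\<lambda>\<omega>. (f (X \<omega>) a)\<^sup>2)"
  shows "R_risk_star M X A Y (cond_mean e q) e f =
           (\<integral>x\<in>XX. e x * (1 - e x) * (cate q x - tau_f f x)\<^sup>2 * p x \<partial>lborel)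
           + sigma_B2 XX p e q 1 + sigma_B2 XX p e q 0"
proof -
  let ?N = "(lborel :: (real^'d) measure) \<Otimes>\<^sub>M count_space {0, 1::real} \<Otimes>\<^sub>M (lborel :: real measure)"
  note D = assms(11)
  note qm = assms(8)
  note pm[measurable] = assms(4) and em[measurable] = assms(6)
  note XXm[measurable] = assms(2)
  have pn: "\<And>x. 0 \<le> p x" by fact
  have e0: "\<And>x. 0 \<le> e x" and e1: "\<And>x. e x \<le> 1" using assms(7) by auto
  note qn = assms(9)
  have qi: "\<And>x a. x \<in> XX \<Longrightarrow> a \<in> {0,1} \<Longrightarrow> integrable lborel (q x a)"
    and q1: "\<And>x a. x \<in> XX \<Longrightarrow> a \<in> {0,1} \<Longrightarrow> (\<integral>y. q x a y \<partial>lborel) = 1"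
    using assms(10) by auto
  note qc[measurable] = qcomp[OF qm]
  have f0[measurable]: "(\<lambda>x. f x 0) \<in> borel_measurable lborel" using assms(13) by simp
  have f1[measurable]: "(\<lambda>x. f x 1) \<in> borel_measurable lborel" using assms(13) by simp
  have tm[measurable]: "tau_f f \<in> borel_measurable lborel" unfolding tau_f_def by measurable
  have Gm: "(\<lambda>(x,a,y). p x * treat_prob e x a * q x a y) \<in> borel_measurable ?N"
    unfolding treat_prob_def by measurable
  have mm[measurable]: "cond_mean e q \<in> borel_measurable lborel"
    unfolding cond_mean_def by measurable
  have rm0[measurable]: "resp q 0 \<in> borel_measurable lborel"
    unfolding resp_def by measurable
  have rm1[measurable]: "resp q 1 \<in> borel_measurable lborel"
    unfolding resp_def by measurable
  have sm0[measurable]: "(\<lambda>x. sigma_y2 q x 0) \<in> borel_measurable lborel"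
    unfolding sigma_y2_def by measurable
  have sm1[measurable]: "(\<lambda>x. sigma_y2 q x 1) \<in> borel_measurable lborel"
    unfolding sigma_y2_def by measurable
  have cm[measurable]: "cate q \<in> borel_measurable lborel" unfolding cate_def by measurable
  have am[measurable]: "(\<lambda>w::(real^'d)\<times>real\<times>real. fst (snd w)) \<in> borel_measurable ?N"
    by (rule measurable_compose[where N="count_space {0,1}"]) auto
  have tp0: "\<And>x. treat_prob e x 0 = 1 - e x" and tp1: "\<And>x. treat_prob e x 1 = e x"
    by (simp_all add: treat_prob_def)
  have Zm: "(\<lambda>\<omega>. (X \<omega>, A \<omega>, Y \<omega>)) \<in> measurable M ?N" using distributed_measurable[OF D] .
  then have Xm[measurable]: "X \<in> borel_measurable M" and Am: "A \<in> measurable M (count_space {0,1})"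
    and Ym[measurable]: "Y \<in> borel_measurable M"
    by (auto simp: measurable_pair_iff o_def)
  have Am'[measurable]: "A \<in> borel_measurable M" by (rule measurable_compose[OF Am]) simp
  note T = transfer[where G="\<lambda>x a y. p x * treat_prob e x a * q x a y", OF D Gm]

  define I2 where "I2 x = (\<integral>\<^sup>+y. ennreal (p x * treat_prob e x 0 * q x 0 y) * ennreal (y\<^sup>2) \<partial>lborel)
     + (\<integral>\<^sup>+y. ennreal (p x * treat_prob e x 1 * q x 1 y) * ennreal (y\<^sup>2) \<partial>lborel)" for x
  have I2m: "I2 \<in> borel_measurable lborel" unfolding I2_def tp0 tp1 by measurable
  have I2eq: "(\<integral>\<^sup>+\<omega>. ennreal ((Y \<omega>)\<^sup>2) \<partial>M) = integral\<^sup>N lborel I2"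
  proof -
    have hm: "(\<lambda>(x::real^'d,a::real,y::real). ennreal (y\<^sup>2)) \<in> borel_measurable ?N" by measurable
    show ?thesis using T[OF hm] unfolding I2_def by simp
  qed
  have Y2fin: "(\<integral>\<^sup>+\<omega>. ennreal ((Y \<omega>)\<^sup>2) \<partial>M) < \<infinity>"
    using nn_integral_eq_integral[OF assms(12)] by simp
  have AEg: "AE x in lborel. I2 x \<noteq> \<infinity>"
    by (rule nn_integral_noteq_infinite[OF I2m]) (use Y2fin I2eq in auto)

  define Psi where "Psi x = (\<integral>\<^sup>+y. ennreal (p x * treat_prob e x 0 * q x 0 y) * ennreal ((tau_f f x)\<^sup>2) \<partial>lborel)
     + (\<integral>\<^sup>+y. ennreal (p x * treat_prob e x 1 * q x 1 y) * ennreal ((tau_f f x)\<^sup>2) \<partial>lborel)" for x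
  have Psim: "Psi \<in> borel_measurable lborel" unfolding Psi_def tp0 tp1 by measurable
  have Psieq: "(\<integral>\<^sup>+\<omega>. ennreal ((tau_f f (X \<omega>))\<^sup>2) \<partial>M) = integral\<^sup>N lborel Psi"
  proof -
    have hm: "(\<lambda>(x::real^'d,a::real,y::real). ennreal ((tau_f f x)\<^sup>2)) \<in> borel_measurable ?N" by measurable
    show ?thesis using T[OF hm] unfolding Psi_def by simp
  qed
  have t2int: "integrable M (\<lambda>\<omega>. (tau_f f (X \<omega>))\<^sup>2)"
  proof (rule Bochner_Integration.integrable_bound)
    show "integrable M (\<lambda>\<omega>. 2 * (f (X \<omega>) 1)\<^sup>2 + 2 * (f (X \<omega>) 0)\<^sup>2)"
      using assms(14) by (intro Bochner_Integration.integrable_add Bochner_Integration.integrable_mult_right) auto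
    show "(\<lambda>\<omega>. (tau_f f (X \<omega>))\<^sup>2) \<in> borel_measurable M" by measurable
    show "AE \<omega> in M. norm ((tau_f f (X \<omega>))\<^sup>2) \<le> norm (2 * (f (X \<omega>) 1)\<^sup>2 + 2 * (f (X \<omega>) 0)\<^sup>2)"
    proof (rule AE_I2)
      fix \<omega>
      have sq: "(a - b)\<^sup>2 \<le> 2 * a\<^sup>2 + 2 * b\<^sup>2" for a b :: real
      proof -
        have "0 \<le> (a + b)\<^sup>2" by simp
        then show ?thesis by (simp add: power2_eq_square algebra_simps)
      qed
      have nn: "0 \<le> 2 * a\<^sup>2 + 2 * b\<^sup>2" for a b :: real by simp
      show "norm ((tau_f f (X \<omega>))\<^sup>2) \<le> norm (2 * (f (X \<omega>) 1)\<^sup>2 + 2 * (f (X \<omega>) 0)\<^sup>2)"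
        unfolding tau_f_def real_norm_def abs_power2 abs_of_nonneg[OF nn] by (rule sq)
    qed
  qed
  have T2fin: "integral\<^sup>N lborel Psi < \<infinity>"
    using nn_integral_eq_integral[OF t2int] Psieq by simp

  define Phi where "Phi x = (\<integral>\<^sup>+y. ennreal (p x * treat_prob e x 0 * q x 0 y)
         * ennreal ((y - (cond_mean e q x + (0 - e x) * tau_f f x))\<^sup>2) \<partial>lborel)
     + (\<integral>\<^sup>+y. ennreal (p x * treat_prob e x 1 * q x 1 y)
         * ennreal ((y - (cond_mean e q x + (1 - e x) * tau_f f x))\<^sup>2) \<partial>lborel)" for x
  have Phim[measurable]: "Phi \<in> borel_measurable lborel" unfolding Phi_def tp0 tp1 by measurable
  define hH where "hH = (\<lambda>(x::real^'d,a::real,y::real).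
      ennreal (((y - cond_mean e q x) - (a - e x) * tau_f f x)\<^sup>2) * indicator XX x)"
  have hHm: "hH \<in> borel_measurable ?N" unfolding hH_def by measurable
  have Heq: "(\<integral>\<^sup>+\<omega>. ennreal (((Y \<omega> - cond_mean e q (X \<omega>)) - (A \<omega> - e (X \<omega>)) * tau_f f (X \<omega>))\<^sup>2) \<partial>M)
      = (\<integral>\<^sup>+x. Phi x * indicator XX x \<partial>lborel)"
  proof -
    have "(\<integral>\<^sup>+\<omega>. ennreal (((Y \<omega> - cond_mean e q (X \<omega>)) - (A \<omega> - e (X \<omega>)) * tau_f f (X \<omega>))\<^sup>2) \<partial>M)
       = (\<integral>\<^sup>+\<omega>. hH (X \<omega>, A \<omega>, Y \<omega>) \<partial>M)"
      by (rule nn_integral_cong_AE) (use assms(3) in \<open>auto simp: hH_def\<close>)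
    also have "\<dots> = (\<integral>\<^sup>+x. Phi x * indicator XX x \<partial>lborel)"
    proof (rule trans[OF T[OF hHm]], rule nn_integral_cong)
      fix x :: "real^'d"
      show "(\<integral>\<^sup>+y. ennreal (p x * treat_prob e x 0 * q x 0 y) * hH (x, 0, y) \<partial>lborel) +
            (\<integral>\<^sup>+y. ennreal (p x * treat_prob e x 1 * q x 1 y) * hH (x, 1, y) \<partial>lborel) =
            Phi x * indicator XX x"
        by (cases "x \<in> XX") (simp_all add: hH_def Phi_def diff_diff_eq)
    qed
    finally show ?thesis .
  qed
  define Aa where "Aa x = e x * (1 - e x) * (cate q x - tau_f f x)\<^sup>2 * p x" for x
  define Bb where "Bb x = sigma_y2 q x 1 * joint_xa p e x 1" for x
  define Cc where "Cc x = sigma_y2 q x 0 * joint_xa p e x 0" for x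
  define V where "V x = p x * (1 - e x) * (sigma_y2 q x 0 + (resp q 0 x)\<^sup>2)
      + p x * e x * (sigma_y2 q x 1 + (resp q 1 x)\<^sup>2)" for x
  have sn: "\<And>x a. 0 \<le> sigma_y2 q x a" unfolding sigma_y2_def
    by (intro Bochner_Integration.integral_nonneg) (simp add: qn)
  have Aan: "\<And>x. 0 \<le> Aa x" unfolding Aa_def using e0 e1 pn by simp
  have Bbn: "\<And>x. 0 \<le> Bb x" unfolding Bb_def joint_xa_def tp1 using e0 pn sn by simp
  have Ccn: "\<And>x. 0 \<le> Cc x" unfolding Cc_def joint_xa_def tp0 using e1 pn sn by simp
  have Vn: "\<And>x. 0 \<le> V x" unfolding V_def using e0 e1 pn sn by simp
  have Aam[measurable]: "Aa \<in> borel_measurable lborel" unfolding Aa_def by measurable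
  have Bbm[measurable]: "Bb \<in> borel_measurable lborel" unfolding Bb_def joint_xa_def tp1 by measurable
  have Ccm[measurable]: "Cc \<in> borel_measurable lborel" unfolding Cc_def joint_xa_def tp0 by measurable
  have key: "Phi x = ennreal (Aa x + Bb x + Cc x) \<and> Psi x = ennreal (p x * (tau_f f x)\<^sup>2) \<and> I2 x = ennreal (V x)"
    if x: "x \<in> XX" and g: "I2 x \<noteq> \<infinity>" for x
  proof -
    have qi0: "integrable lborel (q x 0)" and qi1: "integrable lborel (q x 1)" using qi[OF x] by auto
    have q10: "(\<integral>y. q x 0 y \<partial>lborel) = 1" and q11: "(\<integral>y. q x 1 y \<partial>lborel) = 1" using q1[OF x] by auto
    have w0: "0 \<le> p x * treat_prob e x 0" using pn e1 by (simp add: tp0)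
    have w1: "0 \<le> p x * treat_prob e x 1" using pn e0 by (simp add: tp1)
    have fin0: "(\<integral>\<^sup>+y. ennreal (p x * treat_prob e x 0 * q x 0 y) * ennreal (y\<^sup>2) \<partial>lborel) \<noteq> \<infinity>"
      and fin1: "(\<integral>\<^sup>+y. ennreal (p x * treat_prob e x 1 * q x 1 y) * ennreal (y\<^sup>2) \<partial>lborel) \<noteq> \<infinity>"
      using g unfolding I2_def by auto
    note F0 = fiber[OF qi0 q10 qn w0 fin0] and F1 = fiber[OF qi1 q11 qn w1 fin1]
    have Phi_x: "Phi x = ennreal (p x * treat_prob e x 0 * (sigma_y2 q x 0 + (resp q 0 x - (cond_mean e q x + (0 - e x) * tau_f f x))\<^sup>2))
        + ennreal (p x * treat_prob e x 1 * (sigma_y2 q x 1 + (resp q 1 x - (cond_mean e q x + (1 - e x) * tau_f f x))\<^sup>2))"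
      unfolding Phi_def F0(1) F1(1) sigma_y2_def resp_def ..
    have S_x: "p x * treat_prob e x 0 * (sigma_y2 q x 0 + (resp q 0 x - (cond_mean e q x + (0 - e x) * tau_f f x))\<^sup>2)
        + p x * treat_prob e x 1 * (sigma_y2 q x 1 + (resp q 1 x - (cond_mean e q x + (1 - e x) * tau_f f x))\<^sup>2)
        = Aa x + Bb x + Cc x"
    proof (cases "p x = 0")
      case True then show ?thesis by (simp add: Aa_def Bb_def Cc_def joint_xa_def)
    next
      case False then have pp: "p x > 0" using pn[of x] by simp
      have mrel: "cond_mean e q x = e x * resp q 1 x + (1 - e x) * resp q 0 x"
      proof (cases "e x = 0")
        case True then show ?thesis by (simp add: cond_mean_def resp_def)
      next
        case ne0: False
        show ?thesis
        proof (cases "e x = 1")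
          case True then show ?thesis by (simp add: cond_mean_def resp_def)
        next
          case False
          have "0 < e x" "e x < 1" using ne0 False e0[of x] e1[of x] by auto
          then have "0 < p x * treat_prob e x 0" "0 < p x * treat_prob e x 1" using pp by (simp_all add: tp0 tp1)
          then have i0: "integrable lborel (\<lambda>y. y * q x 0 y)" and i1: "integrable lborel (\<lambda>y. y * q x 1 y)"
            using F0(2) F1(2) by auto
          have "cond_mean e q x = (\<integral>y. e x * (y * q x 1 y) + (1 - e x) * (y * q x 0 y) \<partial>lborel)"
            unfolding cond_mean_def by (rule Bochner_Integration.integral_cong) (simp_all add: algebra_simps)
          also have "\<dots> = e x * resp q 1 x + (1 - e x) * resp q 0 x"
            unfolding resp_def
            by (simp add: Bochner_Integration.integral_add[OF Bochner_Integration.integrable_mult_right[OF i1]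
                  Bochner_Integration.integrable_mult_right[OF i0]])
          finally show ?thesis .
        qed
      qed
      show ?thesis unfolding Aa_def Bb_def Cc_def joint_xa_def cate_def tp0 tp1
        by (rule alg_id[OF mrel])
    qed
    have Phi_ok: "Phi x = ennreal (Aa x + Bb x + Cc x)"
      unfolding Phi_x S_x[symmetric] using w0 w1 sn
      by (intro ennreal_plus[symmetric]) (auto intro!: mult_nonneg_nonneg add_nonneg_nonneg)
    have Psi_ok: "Psi x = ennreal (p x * (tau_f f x)\<^sup>2)"
    proof -
      have "Psi x = ennreal (p x * treat_prob e x 0 * (tau_f f x)\<^sup>2) + ennreal (p x * treat_prob e x 1 * (tau_f f x)\<^sup>2)"
        unfolding Psi_def using fiber_K[OF qi0 q10 qn w0, of "(tau_f f x)\<^sup>2"] fiber_K[OF qi1 q11 qn w1, of "(tau_f f x)\<^sup>2"]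
        by simp
      also have "\<dots> = ennreal (p x * treat_prob e x 0 * (tau_f f x)\<^sup>2 + p x * treat_prob e x 1 * (tau_f f x)\<^sup>2)"
        by (rule ennreal_plus[symmetric]) (use w0 w1 in auto)
      also have "p x * treat_prob e x 0 * (tau_f f x)\<^sup>2 + p x * treat_prob e x 1 * (tau_f f x)\<^sup>2 = p x * (tau_f f x)\<^sup>2"
        by (simp add: tp0 tp1 algebra_simps)
      finally show ?thesis .
    qed
    have I2_ok: "I2 x = ennreal (V x)"
    proof -
      have "I2 x = ennreal (p x * treat_prob e x 0 * (sigma_y2 q x 0 + (resp q 0 x)\<^sup>2))
           + ennreal (p x * treat_prob e x 1 * (sigma_y2 q x 1 + (resp q 1 x)\<^sup>2))"
        using F0(1)[of 0] F1(1)[of 0] unfolding I2_def sigma_y2_def resp_def by simp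
      also have "\<dots> = ennreal (p x * treat_prob e x 0 * (sigma_y2 q x 0 + (resp q 0 x)\<^sup>2)
           + p x * treat_prob e x 1 * (sigma_y2 q x 1 + (resp q 1 x)\<^sup>2))"
        by (rule ennreal_plus[symmetric]) (use w0 w1 sn in auto)
      also have "\<dots> = ennreal (V x)" unfolding V_def tp0 tp1 ..
      finally show ?thesis .
    qed
    show ?thesis using Phi_ok Psi_ok I2_ok by simp
  qed
  have bound: "Aa x + Bb x + Cc x \<le> 2 * V x + 2 * (p x * (tau_f f x)\<^sup>2)" for x
    unfolding Aa_def Bb_def Cc_def V_def joint_xa_def cate_def tp0 tp1
    by (rule alg_bound) (use e0 e1 pn sn in auto)
  have le: "AE x in lborel. Phi x * indicator XX x \<le> 2 * I2 x + 2 * Psi x"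
    using AEg
  proof eventually_elim
    case (elim x)
    show ?case
    proof (cases "x \<in> XX")
      case True
      from key[OF True elim] have k: "Phi x = ennreal (Aa x + Bb x + Cc x)" "I2 x = ennreal (V x)"
        "Psi x = ennreal (p x * (tau_f f x)\<^sup>2)" by auto
      have "ennreal (Aa x + Bb x + Cc x) \<le> ennreal (2 * V x + 2 * (p x * (tau_f f x)\<^sup>2))"
        using bound by (rule ennreal_leI)
      also have "\<dots> = 2 * ennreal (V x) + 2 * ennreal (p x * (tau_f f x)\<^sup>2)"
        using Vn[of x] pn[of x] by (subst ennreal_plus) (auto simp: ennreal_mult')
      finally show ?thesis using k True by simp
    next
      case False then show ?thesis by simp
    qed
  qed
  have Pfin: "(\<integral>\<^sup>+x. Phi x * indicator XX x \<partial>lborel) < \<infinity>"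
  proof -
    have "(\<integral>\<^sup>+x. Phi x * indicator XX x \<partial>lborel) \<le> (\<integral>\<^sup>+x. 2 * I2 x + 2 * Psi x \<partial>lborel)"
      by (rule nn_integral_mono_AE[OF le])
    also have "\<dots> = 2 * integral\<^sup>N lborel I2 + 2 * integral\<^sup>N lborel Psi"
      using I2m Psim by (simp add: nn_integral_add nn_integral_cmult)
    also have "\<dots> < \<infinity>" using Y2fin I2eq T2fin
      by (simp add: ennreal_mult_eq_top_iff less_top[symmetric])
    finally show ?thesis .
  qed
  have AEeq: "AE x in lborel. Phi x * indicator XX x = ennreal (indicator XX x * Aa x)
      + ennreal (indicator XX x * Bb x) + ennreal (indicator XX x * Cc x)"
    using AEg
  proof eventually_elim
    case (elim x)
    show ?case
    proof (cases "x \<in> XX")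
      case True
      from key[OF True elim] have k: "Phi x = ennreal (Aa x + Bb x + Cc x)" by auto
      show ?thesis using True k Aan[of x] Bbn[of x] Ccn[of x] by (simp add: ennreal_plus)
    next
      case False then show ?thesis by simp
    qed
  qed
  define a where "a = (\<integral>\<^sup>+x. ennreal (indicator XX x * Aa x) \<partial>lborel)"
  define b where "b = (\<integral>\<^sup>+x. ennreal (indicator XX x * Bb x) \<partial>lborel)"
  define c where "c = (\<integral>\<^sup>+x. ennreal (indicator XX x * Cc x) \<partial>lborel)"
  have sumeq: "(\<integral>\<^sup>+x. Phi x * indicator XX x \<partial>lborel) = a + b + c"
  proof -
    have "(\<integral>\<^sup>+x. Phi x * indicator XX x \<partial>lborel) = (\<integral>\<^sup>+x. (ennreal (indicator XX x * Aa x)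
      + ennreal (indicator XX x * Bb x)) + ennreal (indicator XX x * Cc x) \<partial>lborel)"
      by (rule nn_integral_cong_AE[OF AEeq])
    also have "\<dots> = (\<integral>\<^sup>+x. ennreal (indicator XX x * Aa x) + ennreal (indicator XX x * Bb x) \<partial>lborel)
       + (\<integral>\<^sup>+x. ennreal (indicator XX x * Cc x) \<partial>lborel)"
      by (rule nn_integral_add) measurable
    also have "(\<integral>\<^sup>+x. ennreal (indicator XX x * Aa x) + ennreal (indicator XX x * Bb x) \<partial>lborel) = a + b"
      unfolding a_def b_def by (rule nn_integral_add) measurable
    finally show ?thesis unfolding c_def .
  qed
  have abc: "a < \<infinity>" "b < \<infinity>" "c < \<infinity>" using Pfin unfolding sumeq
    by (auto simp: less_top[symmetric])
  have LHS: "R_risk_star M X A Y (cond_mean e q) e f = enn2real (a + b + c)"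
    unfolding R_risk_star_def Heq[symmetric] sumeq[symmetric]
    by (rule integral_eq_nn_integral) auto
  have setint: "(\<integral>x\<in>XX. F x \<partial>lborel) = enn2real (\<integral>\<^sup>+x. ennreal (indicator XX x * F x) \<partial>lborel)"
    if "F \<in> borel_measurable lborel" "\<And>x. 0 \<le> F x" for F :: "real^'d \<Rightarrow> real"
    unfolding set_lebesgue_integral_def
    by (subst integral_eq_nn_integral) (use that in \<open>auto simp: indicator_def\<close>)
  have RA: "(\<integral>x\<in>XX. e x * (1 - e x) * (cate q x - tau_f f x)\<^sup>2 * p x \<partial>lborel) = enn2real a"
    using setint[OF Aam Aan] unfolding a_def Aa_def .
  have RB: "sigma_B2 XX p e q 1 = enn2real b"
    using setint[OF Bbm Bbn] unfolding b_def Bb_def sigma_B2_def .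
  have RC: "sigma_B2 XX p e q 0 = enn2real c"
    using setint[OF Ccm Ccn] unfolding c_def Cc_def sigma_B2_def .
  show ?thesis unfolding LHS RA RB RC using abc by (simp add: enn2real_plus)

qed
end
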